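(* Every fractionally $\mathrm{tree}\text{-}\alpha$-fragile graph class has bounded induced biclique number.
   Context: $\alpha$ denotes independence number. The tree-independence number $\mathrm{tree}\text{-}\alpha(G)$ is the minimum over tree decompositions $(T,\{X_t\})$ of $G$ (tree $T$, bags covering vertices and edges, each vertex's bags forming a subtree) of $\max_t\alpha(G[X_t])$. For $\beta\le1$, a $\beta$-general cover of $G$ is a multiset $\mathcal{C}$ of subsets of $V(G)$ with each vertex in at least $\beta|\mathcal{C}|$ members. A class $\mathcal{G}$ (not necessarily hereditary) is fractionally $\mathrm{tree}\text{-}\alpha$-fragile if there is $f\colon\mathbb{N}\to\mathbb{N}$ such that for every $r\in\mathbb{N}$ every $G\in\mathcal{G}$ has a $(1-1/r)$-general cover $\mathcal{C}$ with $\mathrm{tree}\text{-}\alpha(G[C])\le f(r)$ for all $C\in\mathcal{C}$. The induced biclique number of $G$ is the maximum $n$ such that $K_{n,n}$ is an induced subgraph of $G$. *)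

theory Defs
  imports Complex_Main "HOL-Library.Multiset"
begin

type_synonym 'a graph = "'a set \<times> 'a set set"

definition verts :: "'a graph \<Rightarrow> 'a set" where "verts G = fst G"
definition edges :: "'a graph \<Rightarrow> 'a set set" where "edges G = snd G"

definition is_graph :: "'a graph \<Rightarrow> bool" where
  "is_graph G \<longleftrightarrow> finite (verts G) \<and> (\<forall>e\<in>edges G. card e = 2 \<and> e \<subseteq> verts G)"

definition adj :: "'a graph \<Rightarrow> 'a \<Rightarrow> 'a \<Rightarrow> bool" where
  "adj G u v \<longleftrightarrow> {u, v} \<in> edges G"

definition induced :: "'a graph \<Rightarrow> 'a set \<Rightarrow> 'a graph" where
  "induced G C = (verts G \<inter> C, {e \<in> edges G. e \<subseteq> C})"

definition independent :: "'a graph \<Rightarrow> 'a set \<Rightarrow> bool" where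
  "independent G S \<longleftrightarrow> S \<subseteq> verts G \<and> (\<forall>u\<in>S. \<forall>v\<in>S. \<not> adj G u v)"

definition alpha :: "'a graph \<Rightarrow> nat" where
  "alpha G = Max {card S | S. independent G S}"

definition tree_rel :: "nat set \<Rightarrow> nat set set \<Rightarrow> (nat \<times> nat) set" where
  "tree_rel S F = {(s, t). s \<in> S \<and> t \<in> S \<and> {s, t} \<in> F}"

definition connected_in :: "nat set \<Rightarrow> nat set set \<Rightarrow> bool" where
  "connected_in S F \<longleftrightarrow> (\<forall>s\<in>S. \<forall>t\<in>S. (s, t) \<in> (tree_rel S F)\<^sup>*)"

definition is_tree :: "nat set \<Rightarrow> nat set set \<Rightarrow> bool" where
  "is_tree I F \<longleftrightarrow> finite I \<and> I \<noteq> {} \<and> (\<forall>e\<in>F. card e = 2 \<and> e \<subseteq> I)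
     \<and> connected_in I F \<and> card F = card I - 1"

definition is_tree_decomposition ::
  "'a graph \<Rightarrow> nat set \<Rightarrow> nat set set \<Rightarrow> (nat \<Rightarrow> 'a set) \<Rightarrow> bool" where
  "is_tree_decomposition G I F X \<longleftrightarrow>
     is_tree I F
     \<and> (\<forall>t\<in>I. X t \<subseteq> verts G)
     \<and> (\<forall>v\<in>verts G. \<exists>t\<in>I. v \<in> X t)
     \<and> (\<forall>e\<in>edges G. \<exists>t\<in>I. e \<subseteq> X t)
     \<and> (\<forall>v\<in>verts G. connected_in {t\<in>I. v \<in> X t} F)"

definition tree_alpha :: "'a graph \<Rightarrow> nat" where
  "tree_alpha G = (LEAST k. \<exists>I F X. is_tree_decomposition G I F X
                              \<and> (\<forall>t\<in>I. alpha (induced G (X t)) \<le> k))"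

definition general_cover :: "'a graph \<Rightarrow> real \<Rightarrow> 'a set multiset \<Rightarrow> bool" where
  "general_cover G \<beta> \<C> \<longleftrightarrow>
     (\<forall>C\<in>#\<C>. C \<subseteq> verts G)
     \<and> (\<forall>v\<in>verts G. real (size (filter_mset (\<lambda>C. v \<in> C) \<C>)) \<ge> \<beta> * real (size \<C>))"

definition fractionally_tree_alpha_fragile :: "'a graph set \<Rightarrow> bool" where
  "fractionally_tree_alpha_fragile \<G> \<longleftrightarrow>
     (\<exists>f :: nat \<Rightarrow> nat. \<forall>r::nat. r \<ge> 1 \<longrightarrow> (\<forall>G\<in>\<G>. \<exists>\<C>. \<C> \<noteq> {#}
         \<and> general_cover G (1 - 1 / real r) \<C>
         \<and> (\<forall>C\<in>#\<C>. tree_alpha (induced G C) \<le> f r)))"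

definition has_induced_biclique :: "'a graph \<Rightarrow> nat \<Rightarrow> bool" where
  "has_induced_biclique G n \<longleftrightarrow> (\<exists>A B. A \<subseteq> verts G \<and> B \<subseteq> verts G \<and> A \<inter> B = {}
     \<and> card A = n \<and> card B = n
     \<and> independent G A \<and> independent G B
     \<and> (\<forall>a\<in>A. \<forall>b\<in>B. adj G a b))"

definition induced_biclique_number :: "'a graph \<Rightarrow> nat" where
  "induced_biclique_number G = Max {n. has_induced_biclique G n}"

end

theory Submission
  imports Defs "HOL-Library.Multiset"
begin


lemma conn_remove_leaf:
  assumes conn: "connected_in S F" and lS: "l \<in> S" and pS: "p \<in> S" and pl: "p \<noteq> l"
    and uniq: "\<forall>s\<in>S. {l,s} \<in> F \<longrightarrow> s = p"
  shows "connected_in (S - {l}) F"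
proof -
  let ?R = "tree_rel S F" and ?R' = "tree_rel (S - {l}) F"
  have key: "(x,y) \<in> ?R\<^sup>* \<Longrightarrow> x \<in> S - {l} \<Longrightarrow>
      (y \<noteq> l \<longrightarrow> (x,y) \<in> ?R'\<^sup>*) \<and> (y = l \<longrightarrow> (x,p) \<in> ?R'\<^sup>*)" for x y
  proof (induction rule: rtrancl_induct)
    case base then show ?case by auto
  next
    case (step y z)
    have yz: "y \<in> S" "z \<in> S" "{y,z} \<in> F" using step.hyps(2) by (auto simp: tree_rel_def)
    show ?case
    proof (cases "y = l")
      case True
      then have "z = p" if "z \<noteq> l" using uniq yz by auto
      then show ?thesis using step.IH step.prems True by auto
    next
      case False
      show ?thesis
      proof (cases "z = l")
        case True
        then have "y = p" using uniq yz by (metis insert_commute)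
        then show ?thesis using step.IH step.prems False True by auto
      next
        case False2: False
        have "(y,z) \<in> ?R'" using yz False False2 by (auto simp: tree_rel_def)
        then show ?thesis using step.IH step.prems False False2
          by (meson rtrancl.rtrancl_into_rtrancl)
      qed
    qed
  qed
  show ?thesis unfolding connected_in_def
  proof (intro ballI)
    fix s t assume "s \<in> S - {l}" "t \<in> S - {l}"
    moreover have "(s,t) \<in> ?R\<^sup>*" using conn calculation unfolding connected_in_def by auto
    ultimately show "(s,t) \<in> ?R'\<^sup>*" using key by auto
  qed
qed

lemma leaf_nbr:
  assumes conn: "connected_in S F" and "l \<in> S" "s \<in> S" "s \<noteq> l"
    and uniq: "\<forall>u\<in>S. {l,u} \<in> F \<longrightarrow> u = p"
  shows "p \<in> S"
proof -
  have "(l,s) \<in> (tree_rel S F)\<^sup>*" using conn assms unfolding connected_in_def by auto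
  then show ?thesis
  proof (cases rule: converse_rtranclE)
    case base then show ?thesis using assms by auto
  next
    case (step u)
    then show ?thesis using uniq by (auto simp: tree_rel_def)
  qed
qed

lemma tree_rel_drop:
  assumes "l \<notin> S" "l \<in> e"
  shows "tree_rel S (F - {e}) = tree_rel S F"
  using assms unfolding tree_rel_def by auto

lemma conn_drop:
  assumes "connected_in S F" "l \<notin> S" "l \<in> e"
  shows "connected_in S (F - {e})"
  using assms tree_rel_drop[OF assms(2,3)] unfolding connected_in_def by simp

lemma leaf_exists:
  assumes T: "is_tree I F" and c2: "card I \<ge> 2"
  shows "\<exists>l p. l \<in> I \<and> p \<in> I \<and> l \<noteq> p \<and> {l,p} \<in> F \<and> (\<forall>e\<in>F. l \<in> e \<longrightarrow> e = {l,p})"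
proof -
  have fI: "finite I" and eF: "\<forall>e\<in>F. card e = 2 \<and> e \<subseteq> I" and conn: "connected_in I F"
    and cF: "card F = card I - 1" using T unfolding is_tree_def by auto
  have fF: "finite F" using eF fI by (meson Pow_iff finite_Pow_iff finite_subset subsetI)
  define deg where "deg t = card {e\<in>F. t \<in> e}" for t
  have "(\<Sum>t\<in>I. deg t) = (\<Sum>t\<in>I. \<Sum>e\<in>F. if t \<in> e then 1 else 0)"
    unfolding deg_def using fF by (simp add: sum.If_cases Int_def conj_commute)
  also have "\<dots> = (\<Sum>e\<in>F. \<Sum>t\<in>I. if t \<in> e then 1 else 0)" by (rule sum.swap)
  also have "\<dots> = (\<Sum>e\<in>F. card (I \<inter> e))" using fI by (simp add: sum.If_cases)
  also have "\<dots> = (\<Sum>e\<in>F. 2)" using eF by (intro sum.cong) (auto simp: Int_absorb1)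
  also have "\<dots> = 2 * card F" by simp
  finally have sumdeg: "(\<Sum>t\<in>I. deg t) = 2 * card F" .
  have pos: "deg t \<ge> 1" if tI: "t \<in> I" for t
  proof -
    obtain s where sI: "s \<in> I" "s \<noteq> t"
    proof -
      have "\<not> I \<subseteq> {t}"
      proof
        assume "I \<subseteq> {t}"
        then have "card I \<le> card {t}" by (intro card_mono) auto
        then show False using c2 by simp
      qed
      then show ?thesis using that by auto
    qed
    have "(t,s) \<in> (tree_rel I F)\<^sup>*" using conn tI sI unfolding connected_in_def by auto
    then obtain u where "(t,u) \<in> tree_rel I F"
      using sI by (cases rule: converse_rtranclE) auto
    then have "{t,u} \<in> {e\<in>F. t \<in> e}" by (auto simp: tree_rel_def)
    moreover have "finite {e\<in>F. t \<in> e}" using fF by auto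
    ultimately show ?thesis unfolding deg_def
      by (metis card_gt_0_iff empty_iff One_nat_def Suc_leI)
  qed
  have "\<exists>l\<in>I. deg l \<le> 1"
  proof (rule ccontr)
    assume "\<not> ?thesis"
    then have "\<forall>t\<in>I. 2 \<le> deg t" by auto
    then have "(\<Sum>t\<in>I. (2::nat)) \<le> (\<Sum>t\<in>I. deg t)" by (intro sum_mono) auto
    then have "2 * card I \<le> 2 * card F" using sumdeg by simp
    then show False using cF c2 by simp
  qed
  then obtain l where lI: "l \<in> I" and "deg l \<le> 1" by auto
  with pos have "deg l = 1" by force
  then obtain e0 where e0: "{e\<in>F. l \<in> e} = {e0}" unfolding deg_def using card_1_singletonE by blast
  then have e0F: "e0 \<in> F" "l \<in> e0" by auto
  then have "card e0 = 2" "e0 \<subseteq> I" using eF by auto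
  then obtain x y where xy: "e0 = {x,y}" "x \<noteq> y" by (meson card_2_iff)
  obtain p where ep: "e0 = {l,p}" "p \<noteq> l" using xy e0F by (metis insert_commute insertE singletonD)
  show ?thesis
  proof (intro exI conjI)
    show "l \<in> I" by fact
    show "p \<in> I" using \<open>e0 \<subseteq> I\<close> ep by auto
    show "l \<noteq> p" using ep by auto
    show "{l,p} \<in> F" using e0F ep by auto
    show "\<forall>e\<in>F. l \<in> e \<longrightarrow> e = {l,p}" using e0 ep by auto
  qed
qed

lemma helly2:
  assumes "is_tree I F"
    and "\<forall>a\<in>A. TA a \<noteq> {} \<and> TA a \<subseteq> I \<and> connected_in (TA a) F"
    and "\<forall>b\<in>B. TB b \<noteq> {} \<and> TB b \<subseteq> I \<and> connected_in (TB b) F"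
    and "\<forall>a\<in>A. \<forall>b\<in>B. TA a \<inter> TB b \<noteq> {}"
  shows "\<exists>t\<in>I. (\<forall>a\<in>A. t \<in> TA a) \<or> (\<forall>b\<in>B. t \<in> TB b)"
  using assms
proof (induction "card I" arbitrary: I F TA TB rule: less_induct)
  case less
  note T = less.prems(1) and HA = less.prems(2) and HB = less.prems(3) and HI = less.prems(4)
  have fI: "finite I" and neI: "I \<noteq> {}" and eF: "\<forall>e\<in>F. card e = 2 \<and> e \<subseteq> I"
    and conn: "connected_in I F" and cF: "card F = card I - 1"
    using T unfolding is_tree_def by auto
  have fF: "finite F" using eF fI by (meson Pow_iff finite_Pow_iff finite_subset subsetI)
  show ?case
  proof (cases "card I \<ge> 2")
    case False
    moreover have "card I \<noteq> 0" using fI neI by simp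
    ultimately have "card I = 1" by linarith
    then obtain t where It: "I = {t}" using card_1_singletonE by blast
    have "t \<in> TA a" if "a \<in> A" for a
    proof -
      have "TA a \<subseteq> {t}" "TA a \<noteq> {}" using HA It that by auto
      then show ?thesis by blast
    qed
    then show ?thesis using It by blast
  next
    case True
    obtain l p where lp: "l \<in> I" "p \<in> I" "l \<noteq> p" "{l,p} \<in> F"
      and lf: "\<forall>e\<in>F. l \<in> e \<longrightarrow> e = {l,p}"
      using leaf_exists[OF T True] by blast
    have uniq: "\<forall>u\<in>S. {l,u} \<in> F \<longrightarrow> u = p" for S
      using lf by (metis doubleton_eq_iff insertI1)
    show ?thesis
    proof (cases "\<exists>a\<in>A. TA a = {l}")
      case True
      then obtain a where "a \<in> A" "TA a = {l}" by blast
      then have "\<forall>b\<in>B. l \<in> TB b" using HI by fastforce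
      then show ?thesis using lp by auto
    next
      case nA: False
      show ?thesis
      proof (cases "\<exists>b\<in>B. TB b = {l}")
        case True
        then obtain b where "b \<in> B" "TB b = {l}" by blast
        then have "\<forall>a\<in>A. l \<in> TA a" using HI by fastforce
        then show ?thesis using lp by auto
      next
        case nB: False
        define I' where "I' = I - {l}"
        define F' where "F' = F - {{l,p}}"
        define TA' where "TA' a = TA a - {l}" for a
        define TB' where "TB' b = TB b - {l}" for b
        have sub: "connected_in (S - {l}) F' \<and> S - {l} \<noteq> {} \<and> (l \<in> S \<longrightarrow> p \<in> S)"
          if SA: "connected_in S F" "S \<noteq> {}" "S \<noteq> {l}" for S
        proof -
          obtain s where s: "s \<in> S" "s \<noteq> l" using SA by blast
          have pS: "l \<in> S \<longrightarrow> p \<in> S" using leaf_nbr[OF SA(1) _ s(1) s(2) uniq] by blast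
          have "connected_in (S - {l}) F"
          proof (cases "l \<in> S")
            case True
            then show ?thesis using conn_remove_leaf[OF SA(1) True _ _ uniq] pS lp by auto
          next
            case False then show ?thesis using SA by simp
          qed
          then have "connected_in (S - {l}) F'" unfolding F'_def
            by (rule conn_drop) auto
          then show ?thesis using s pS by auto
        qed
        have cI: "card I' < card I" unfolding I'_def using fI lp by (meson card_Diff1_less)
        have T': "is_tree I' F'"
          unfolding is_tree_def
        proof (intro conjI)
          show "finite I'" using fI I'_def by auto
          show "I' \<noteq> {}" using lp I'_def by auto
          show "\<forall>e\<in>F'. card e = 2 \<and> e \<subseteq> I'"
          proof
            fix e assume "e \<in> F'"
            then have e: "e \<in> F" "e \<noteq> {l,p}" unfolding F'_def by auto
            then have "l \<notin> e" using lf by auto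
            then show "card e = 2 \<and> e \<subseteq> I'" using eF e unfolding I'_def by auto
          qed
          have "card I \<noteq> 0" "I \<noteq> {l}" using True lp by auto
          then show "connected_in I' F'" using sub[OF conn neI] unfolding I'_def by simp
          show "card F' = card I' - 1" unfolding F'_def I'_def using fF fI lp cF by simp
        qed
        have HA': "\<forall>a\<in>A. TA' a \<noteq> {} \<and> TA' a \<subseteq> I' \<and> connected_in (TA' a) F'"
        proof
          fix a assume "a \<in> A"
          then have h: "connected_in (TA a) F" "TA a \<noteq> {}" "TA a \<noteq> {l}" "TA a \<subseteq> I" using HA nA by auto
          show "TA' a \<noteq> {} \<and> TA' a \<subseteq> I' \<and> connected_in (TA' a) F'"
            using sub[OF h(1-3)] h(4) unfolding TA'_def I'_def by auto
        qed
        have HB': "\<forall>b\<in>B. TB' b \<noteq> {} \<and> TB' b \<subseteq> I' \<and> connected_in (TB' b) F'"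
        proof
          fix a assume "a \<in> B"
          then have h: "connected_in (TB a) F" "TB a \<noteq> {}" "TB a \<noteq> {l}" "TB a \<subseteq> I" using HB nB by auto
          show "TB' a \<noteq> {} \<and> TB' a \<subseteq> I' \<and> connected_in (TB' a) F'"
            using sub[OF h(1-3)] h(4) unfolding TB'_def I'_def by auto
        qed
        have HI': "\<forall>a\<in>A. \<forall>b\<in>B. TA' a \<inter> TB' b \<noteq> {}"
        proof (intro ballI)
          fix a b assume ab: "a \<in> A" "b \<in> B"
          obtain x where x: "x \<in> TA a" "x \<in> TB b" using HI ab by blast
          show "TA' a \<inter> TB' b \<noteq> {}"
          proof (cases "x = l")
            case True
            have h: "connected_in (TA a) F" "TA a \<noteq> {}" "TA a \<noteq> {l}" using HA nA ab by auto
            have h2: "connected_in (TB b) F" "TB b \<noteq> {}" "TB b \<noteq> {l}" using HB nB ab by auto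
            have "p \<in> TA a" "p \<in> TB b" using sub[OF h] sub[OF h2] x True by auto
            then show ?thesis using lp unfolding TA'_def TB'_def by auto
          next
            case False then show ?thesis using x unfolding TA'_def TB'_def by auto
          qed
        qed
        obtain t where "t \<in> I'" "(\<forall>a\<in>A. t \<in> TA' a) \<or> (\<forall>b\<in>B. t \<in> TB' b)"
          using less.hyps[OF cI T' HA' HB' HI'] by blast
        then show ?thesis unfolding I'_def TA'_def TB'_def by auto
      qed
    qed
  qed
qed



lemma alpha_ge:
  assumes "finite (verts K)" "independent K S"
  shows "card S \<le> alpha K"
proof -
  have "{card S | S. independent K S} \<subseteq> card ` Pow (verts K)"
  proof
    fix x assume "x \<in> {card S | S. independent K S}"
    then obtain S where S: "x = card S" "independent K S" by blast
    then have "S \<in> Pow (verts K)" unfolding independent_def by simp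
    then show "x \<in> card ` Pow (verts K)" using S(1) by (rule rev_image_eqI)
  qed
  then have "finite {card S | S. independent K S}"
    by (rule finite_subset) (use assms(1) in simp)
  then show ?thesis unfolding alpha_def using assms(2) by (intro Max_ge) auto
qed

lemma ta_lower:
  assumes G: "is_graph G" and AC: "A \<subseteq> verts G \<inter> C" and BC: "B \<subseteq> verts G \<inter> C"
    and iA: "independent G A" and iB: "independent G B" and adjAB: "\<forall>a\<in>A. \<forall>b\<in>B. adj G a b"
  shows "card A \<le> tree_alpha (induced G C) \<or> card B \<le> tree_alpha (induced G C)"
proof -
  define H where "H = induced G C"
  have vH: "verts H = verts G \<inter> C" and eH: "edges H = {e \<in> edges G. e \<subseteq> C}"
    unfolding H_def induced_def verts_def edges_def by auto
  have fG: "finite (verts G)" using G unfolding is_graph_def by auto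
  have eHv: "\<forall>e\<in>edges H. e \<subseteq> verts H" using G eH vH unfolding is_graph_def by auto
  define P where "P k = (\<exists>I F X. is_tree_decomposition H I F X \<and> (\<forall>t\<in>I. alpha (induced H (X t)) \<le> k))" for k
  have "P (alpha (induced H (verts H)))"
    unfolding P_def
  proof (intro exI conjI)
    show "is_tree_decomposition H {0} {} (\<lambda>_. verts H)"
      using eHv unfolding is_tree_decomposition_def is_tree_def connected_in_def by auto
  qed auto
  then have "P (tree_alpha H)" unfolding tree_alpha_def P_def[symmetric] by (rule LeastI)
  then obtain I F X where TD: "is_tree_decomposition H I F X"
    and bags: "\<forall>t\<in>I. alpha (induced H (X t)) \<le> tree_alpha H" unfolding P_def by blast
  have T: "is_tree I F" and Xs: "\<forall>t\<in>I. X t \<subseteq> verts H" and cov: "\<forall>v\<in>verts H. \<exists>t\<in>I. v \<in> X t"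
    and ecov: "\<forall>e\<in>edges H. \<exists>t\<in>I. e \<subseteq> X t" and con: "\<forall>v\<in>verts H. connected_in {t\<in>I. v \<in> X t} F"
    using TD unfolding is_tree_decomposition_def by auto
  define TV where "TV v = {t\<in>I. v \<in> X t}" for v
  have HV: "\<forall>v\<in>S. TV v \<noteq> {} \<and> TV v \<subseteq> I \<and> connected_in (TV v) F" if "S \<subseteq> verts H" for S
    using that cov con unfolding TV_def by blast
  have HI: "\<forall>a\<in>A. \<forall>b\<in>B. TV a \<inter> TV b \<noteq> {}"
  proof (intro ballI)
    fix a b assume ab: "a \<in> A" "b \<in> B"
    then have "{a,b} \<in> edges H" using adjAB AC BC unfolding eH adj_def by auto
    then obtain t where "t \<in> I" "{a,b} \<subseteq> X t" using ecov by blast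
    then show "TV a \<inter> TV b \<noteq> {}" unfolding TV_def by auto
  qed
  obtain t where tI: "t \<in> I" and tt: "(\<forall>a\<in>A. t \<in> TV a) \<or> (\<forall>b\<in>B. t \<in> TV b)"
    using helly2[OF T HV[of A] HV[of B] HI] AC BC vH by auto
  define K where "K = induced H (X t)"
  have vK: "verts K = verts H \<inter> X t" and eK: "edges K \<subseteq> edges G"
    unfolding K_def induced_def verts_def edges_def using eH by (auto simp: edges_def)
  have fK: "finite (verts K)" using vK vH fG by auto
  have indK: "independent K S" if "S \<subseteq> X t" "S \<subseteq> verts H" "independent G S" for S
    using that eK vK unfolding independent_def adj_def by blast
  have "alpha K \<le> tree_alpha H" using bags tI K_def by auto
  moreover have "card A \<le> alpha K \<or> card B \<le> alpha K"
  proof (cases "\<forall>a\<in>A. t \<in> TV a")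
    case True
    then have "A \<subseteq> X t" unfolding TV_def by auto
    then show ?thesis using alpha_ge[OF fK indK[OF _ _ iA]] AC vH by auto
  next
    case False
    then have "B \<subseteq> X t" using tt unfolding TV_def by auto
    then show ?thesis using alpha_ge[OF fK indK[OF _ _ iB]] BC vH by auto
  qed
  ultimately show ?thesis unfolding H_def by linarith
qed



lemma sum_count:
  assumes "finite D"
  shows "(\<Sum>C\<in>#M. card (C \<inter> D)) = (\<Sum>v\<in>D. size (filter_mset (\<lambda>C. v \<in> C) M))"
proof (induction M)
  case empty then show ?case by simp
next
  case (add C M)
  have "(\<Sum>v\<in>D. size (filter_mset (\<lambda>C'. v \<in> C') (add_mset C M)))
      = (\<Sum>v\<in>D. (if v \<in> C then 1 else 0) + size (filter_mset (\<lambda>C'. v \<in> C') M))"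
    by (intro sum.cong) auto
  also have "\<dots> = (\<Sum>v\<in>D. (if v \<in> C then 1 else 0)) + (\<Sum>v\<in>D. size (filter_mset (\<lambda>C'. v \<in> C') M))"
    by (rule sum.distrib)
  also have "(\<Sum>v\<in>D. (if v \<in> C then 1 else 0)) = card (C \<inter> D)"
    using assms by (simp add: sum.If_cases Int_commute)
  finally show ?case using add.IH by simp
qed

lemma avg_bound:
  fixes g :: "'b \<Rightarrow> nat"
  shows "M \<noteq> {#} \<Longrightarrow> (\<forall>C\<in>#M. g C < x) \<Longrightarrow> (\<Sum>C\<in>#M. g C) < x * size M"
proof (induction M)
  case empty then show ?case by simp
next
  case (add C M)
  show ?case
  proof (cases "M = {#}")
    case True then show ?thesis using add.prems by simp
  next
    case False then show ?thesis using add.prems add.IH by simp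
  qed
qed

lemma indep_sub: "independent G A \<Longrightarrow> S \<subseteq> A \<Longrightarrow> independent G S"
  unfolding independent_def by blast

lemma bound_G:
  assumes G: "is_graph G" and ne: "\<C> \<noteq> {#}" and gc: "general_cover G (1 - 1 / real (4::nat)) \<C>"
    and ta: "\<forall>C\<in>#\<C>. tree_alpha (induced G C) \<le> k"
  shows "induced_biclique_number G \<le> 2 * k"
proof -
  have fG: "finite (verts G)" using G unfolding is_graph_def by auto
  let ?S = "{n. has_induced_biclique G n}"
  have "?S \<subseteq> {..card (verts G)}"
  proof
    fix n assume "n \<in> ?S"
    then obtain A where "A \<subseteq> verts G" "card A = n" unfolding has_induced_biclique_def by blast
    then show "n \<in> {..card (verts G)}" using card_mono[OF fG] by auto
  qed
  then have fS: "finite ?S" by (rule finite_subset) simp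
  have "0 \<in> ?S" unfolding has_induced_biclique_def independent_def
    by (rule CollectI, rule exI[of _ "{}"], rule exI[of _ "{}"]) simp
  then have "induced_biclique_number G \<in> ?S" unfolding induced_biclique_number_def
    using fS by (intro Max_in) auto
  then obtain A B where AB: "A \<subseteq> verts G" "B \<subseteq> verts G" "A \<inter> B = {}"
     "card A = induced_biclique_number G" "card B = induced_biclique_number G"
     "independent G A" "independent G B" "\<forall>a\<in>A. \<forall>b\<in>B. adj G a b"
    unfolding has_induced_biclique_def by blast
  define n where "n = induced_biclique_number G"
  have fA: "finite A" using finite_subset[OF AB(1) fG] .
  have fB: "finite B" using finite_subset[OF AB(2) fG] .
  define D where "D = A \<union> B"
  have fD: "finite D" using fA fB D_def by simp
  have cD: "card D = 2 * n" unfolding D_def using AB fA fB n_def by (simp add: card_Un_disjoint)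
  have cov: "3 * size \<C> \<le> 4 * size (filter_mset (\<lambda>C. v \<in> C) \<C>)" if "v \<in> D" for v
  proof -
    have "v \<in> verts G" using that AB D_def by auto
    then have "(1 - 1 / real (4::nat)) * real (size \<C>) \<le> real (size (filter_mset (\<lambda>C. v \<in> C) \<C>))"
      using gc unfolding general_cover_def by auto
    then have "real (3 * size \<C>) \<le> real (4 * size (filter_mset (\<lambda>C. v \<in> C) \<C>))" by simp
    then show ?thesis by linarith
  qed
  have "\<exists>C\<in>#\<C>. 3 * card D \<le> 4 * card (C \<inter> D)"
  proof (rule ccontr)
    assume "\<not> ?thesis"
    then have "\<forall>C\<in>#\<C>. 4 * card (C \<inter> D) < 3 * card D" by auto
    then have lt: "(\<Sum>C\<in>#\<C>. 4 * card (C \<inter> D)) < 3 * card D * size \<C>"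
      by (rule avg_bound[OF ne])
    have "(\<Sum>C\<in>#\<C>. 4 * card (C \<inter> D)) = 4 * (\<Sum>C\<in>#\<C>. card (C \<inter> D))"
      by (simp add: sum_mset_distrib_left)
    also have "\<dots> = (\<Sum>v\<in>D. 4 * size (filter_mset (\<lambda>C. v \<in> C) \<C>))"
      using sum_count[OF fD] by (simp add: sum_distrib_left)
    also have "\<dots> \<ge> (\<Sum>v\<in>D. 3 * size \<C>)" using cov by (intro sum_mono) auto
    finally have ge: "(\<Sum>v\<in>D. 3 * size \<C>) \<le> (\<Sum>C\<in>#\<C>. 4 * card (C \<inter> D))" .
    have "(\<Sum>v\<in>D. 3 * size \<C>) = 3 * card D * size \<C>" by simp
    then show False using lt ge by linarith
  qed
  then obtain C where CC: "C \<in># \<C>" and big: "3 * card D \<le> 4 * card (C \<inter> D)" by blast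
  have split: "card (C \<inter> D) = card (A \<inter> C) + card (B \<inter> C)"
  proof -
    have "C \<inter> D = (A \<inter> C) \<union> (B \<inter> C)" unfolding D_def by auto
    then show ?thesis using fA fB AB(3) by (simp add: card_Un_disjoint disjoint_iff)
  qed
  have leA: "card (A \<inter> C) \<le> n" using fA AB(4) n_def by (metis card_mono inf_le1)
  have leB: "card (B \<inter> C) \<le> n" using fB AB(5) n_def by (metis card_mono inf_le1)
  have "card (A \<inter> C) \<le> tree_alpha (induced G C) \<or> card (B \<inter> C) \<le> tree_alpha (induced G C)"
  proof (rule ta_lower[OF G])
    show "A \<inter> C \<subseteq> verts G \<inter> C" "B \<inter> C \<subseteq> verts G \<inter> C" using AB(1,2) by auto
    show "independent G (A \<inter> C)" by (rule indep_sub[OF AB(6)]) simp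
    show "independent G (B \<inter> C)" by (rule indep_sub[OF AB(7)]) simp
    show "\<forall>a\<in>A \<inter> C. \<forall>b\<in>B \<inter> C. adj G a b" using AB(8) by simp
  qed
  moreover have "tree_alpha (induced G C) \<le> k" using ta CC by auto
  ultimately have "card (A \<inter> C) \<le> k \<or> card (B \<inter> C) \<le> k" by linarith
  then show ?thesis using big split leA leB cD n_def by linarith
qed


theorem lemma5p5:
  fixes \<G> :: "'a graph set"
  assumes "\<forall>G\<in>\<G>. is_graph G"
    and "fractionally_tree_alpha_fragile \<G>"
  shows "\<exists>N. \<forall>G\<in>\<G>. induced_biclique_number G \<le> N"
proof -
  obtain f :: "nat \<Rightarrow> nat" where hf: "\<forall>r::nat. r \<ge> 1 \<longrightarrow> (\<forall>G\<in>\<G>. \<exists>\<C>. \<C> \<noteq> {#}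
         \<and> general_cover G (1 - 1 / real r) \<C>
         \<and> (\<forall>C\<in>#\<C>. tree_alpha (induced G C) \<le> f r))"
    using assms(2) unfolding fractionally_tree_alpha_fragile_def by blast
  have "induced_biclique_number G \<le> 2 * f 4" if GG: "G \<in> \<G>" for G
  proof -
    obtain \<C> where "\<C> \<noteq> {#}" "general_cover G (1 - 1 / real (4::nat)) \<C>"
        "\<forall>C\<in>#\<C>. tree_alpha (induced G C) \<le> f 4"
    proof -
      have "(4::nat) \<ge> 1" by simp
      then have "\<exists>\<C>. \<C> \<noteq> {#} \<and> general_cover G (1 - 1 / real (4::nat)) \<C>
         \<and> (\<forall>C\<in>#\<C>. tree_alpha (induced G C) \<le> f 4)" using hf GG by blast
      then show ?thesis using that by blast
    qed
    then show ?thesis using bound_G assms(1) GG by blast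
  qed
  then show ?thesis by blast
qed

end
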